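(* Biased Dissolution restricted to instances whose graph $G=(V,E)$ is a complete graph is solvable in $O(|V|^2)$ time (assuming constant-time arithmetic operations).
   Context: For $V'\subseteq V(G)$ let $Z(V',G):=\{(x,y)\mid x\in V',\ y\in V(G)\setminus V',\ \{x,y\}\in E(G)\}$. For positive integers $s,\Delta_s$, an $(s,\Delta_s)$-dissolution for an undirected graph $G$ is a pair $(D,z)$ with $D\subset V(G)$ and $z\colon Z(D,G)\to\{0,\dots,s\}$ such that (a) each $v'\in D$ satisfies $\sum_{(v',v)\in Z(D,G)} z(v',v)=s$, and (b) each $v\in V(G)\setminus D$ satisfies $\sum_{(v',v)\in Z(D,G)} z(v',v)=\Delta_s$. Given $\alpha\colon V(G)\to\{0,\dots,s\}$ and an integer $r_\alpha$, a tuple $(D,z,z_\alpha,R_\alpha)$ is an $r_\alpha$-biased $(s,\Delta_s)$-dissolution for $(G,\alpha)$ if $(D,z)$ is an $(s,\Delta_s)$-dissolution, $z_\alpha\colon Z(D,G)\to\{0,\dots,s\}$, $R_\alpha\subseteq V(G)\setminus D$ with $|R_\alpha|=r_\alpha$, and (c) $z_\alpha(v',v)\le z(v',v)$ for all $(v',v)\in Z(D,G)$; (d) each $v'\in D$ satisfies $\sum_{(v',v)\in Z(D,G)} z_\alpha(v',v)=\alpha(v')$; (e) each $v\in R_\alpha$ satisfies $\alpha(v)+\sum_{(v',v)\in Z(D,G)} z_\alpha(v',v)>(s+\Delta_s)/2$. Biased Dissolution: given an undirected graph $G$, positive integers $s,\Delta_s,r_\alpha$ and $\alpha\colon V(G)\to\{0,\dots,s\}$,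 decide whether an $r_\alpha$-biased $(s,\Delta_s)$-dissolution for $(G,\alpha)$ exists. *)

theory Defs
  imports Complex_Main
begin

text \<open>An undirected graph is given by a vertex set V and a set E of 2-element
  vertex sets (edges).\<close>

definition Zset :: "'a set \<Rightarrow> 'a set \<Rightarrow> 'a set set \<Rightarrow> ('a \<times> 'a) set" where
  "Zset V' V E = {(x, y). x \<in> V' \<and> y \<in> V - V' \<and> {x, y} \<in> E}"

definition dissolution ::
  "'a set \<Rightarrow> 'a set set \<Rightarrow> nat \<Rightarrow> nat \<Rightarrow> 'a set \<Rightarrow> ('a \<times> 'a \<Rightarrow> nat) \<Rightarrow> bool" where
  "dissolution V E s \<Delta> D z \<longleftrightarrow>
     D \<subset> V \<and>
     (\<forall>p \<in> Zset D V E. z p \<le> s) \<and>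
     (\<forall>v' \<in> D. (\<Sum>p \<in> {p \<in> Zset D V E. fst p = v'}. z p) = s) \<and>
     (\<forall>v \<in> V - D. (\<Sum>p \<in> {p \<in> Zset D V E. snd p = v}. z p) = \<Delta>)"

definition biased_dissolution ::
  "'a set \<Rightarrow> 'a set set \<Rightarrow> nat \<Rightarrow> nat \<Rightarrow> nat \<Rightarrow> ('a \<Rightarrow> nat) \<Rightarrow>
   'a set \<Rightarrow> ('a \<times> 'a \<Rightarrow> nat) \<Rightarrow> ('a \<times> 'a \<Rightarrow> nat) \<Rightarrow> 'a set \<Rightarrow> bool" where
  "biased_dissolution V E s \<Delta> r \<alpha> D z z\<^sub>\<alpha> R\<^sub>\<alpha> \<longleftrightarrow>
     dissolution V E s \<Delta> D z \<and>
     (\<forall>p \<in> Zset D V E. z\<^sub>\<alpha> p \<le> s) \<and>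
     R\<^sub>\<alpha> \<subseteq> V - D \<and> card R\<^sub>\<alpha> = r \<and>
     (\<forall>p \<in> Zset D V E. z\<^sub>\<alpha> p \<le> z p) \<and>
     (\<forall>v' \<in> D. (\<Sum>p \<in> {p \<in> Zset D V E. fst p = v'}. z\<^sub>\<alpha> p) = \<alpha> v') \<and>
     (\<forall>v \<in> R\<^sub>\<alpha>. real (\<alpha> v + (\<Sum>p \<in> {p \<in> Zset D V E. snd p = v}. z\<^sub>\<alpha> p))
                      > real (s + \<Delta>) / 2)"

definition Biased_Dissolution ::
  "'a set \<Rightarrow> 'a set set \<Rightarrow> nat \<Rightarrow> nat \<Rightarrow> nat \<Rightarrow> ('a \<Rightarrow> nat) \<Rightarrow> bool" where
  "Biased_Dissolution V E s \<Delta> r \<alpha> \<longleftrightarrow>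
     (\<exists>D z z\<^sub>\<alpha> R\<^sub>\<alpha>. biased_dissolution V E s \<Delta> r \<alpha> D z z\<^sub>\<alpha> R\<^sub>\<alpha>)"

definition complete_edges :: "nat \<Rightarrow> nat set set" where
  "complete_edges n = {{x, y} | x y. x < n \<and> y < n \<and> x \<noteq> y}"

text \<open>Registers hold unbounded integers; there are unboundedly many arrays with
  integer addresses, initially 0. Every arithmetic operation costs constant time
  (expressions are part of the fixed program, so their evaluation is charged
  as a constant per executed command).\<close>

record state =
  regs :: "nat \<Rightarrow> int"
  arrs :: "nat \<Rightarrow> int \<Rightarrow> int"

datatype aexp = N int | Reg nat | Arr nat aexp
  | Plus aexp aexp | Minus aexp aexp | Times aexp aexp | Div aexp aexp | Mod aexp aexp

datatype bexp = Bc bool | Not bexp | And bexp bexp | Less aexp aexp | Eq aexp aexp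

datatype com = SKIP | Assign nat aexp | ArrAssign nat aexp aexp
  | Seq com com | If bexp com com | While bexp com

fun aval :: "aexp \<Rightarrow> state \<Rightarrow> int" where
  "aval (N i) st = i"
| "aval (Reg k) st = regs st k"
| "aval (Arr a e) st = arrs st a (aval e st)"
| "aval (Plus e1 e2) st = aval e1 st + aval e2 st"
| "aval (Minus e1 e2) st = aval e1 st - aval e2 st"
| "aval (Times e1 e2) st = aval e1 st * aval e2 st"
| "aval (Div e1 e2) st = aval e1 st div aval e2 st"
| "aval (Mod e1 e2) st = aval e1 st mod aval e2 st"

fun bval :: "bexp \<Rightarrow> state \<Rightarrow> bool" where
  "bval (Bc b) st = b"
| "bval (Not b) st = (\<not> bval b st)"
| "bval (And b1 b2) st = (bval b1 st \<and> bval b2 st)"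
| "bval (Less e1 e2) st = (aval e1 st < aval e2 st)"
| "bval (Eq e1 e2) st = (aval e1 st = aval e2 st)"

inductive exec :: "com \<Rightarrow> state \<Rightarrow> nat \<Rightarrow> state \<Rightarrow> bool" where
  Skip: "exec SKIP st 1 st"
| Assign: "exec (Assign k e) st 1 (st\<lparr>regs := (regs st)(k := aval e st)\<rparr>)"
| ArrAssign: "exec (ArrAssign a i e) st 1
     (st\<lparr>arrs := (arrs st)(a := (arrs st a)(aval i st := aval e st))\<rparr>)"
| Seq: "exec c1 st t1 st1 \<Longrightarrow> exec c2 st1 t2 st2 \<Longrightarrow> exec (Seq c1 c2) st (t1 + t2) st2"
| IfT: "bval b st \<Longrightarrow> exec c1 st t st' \<Longrightarrow> exec (If b c1 c2) st (t + 1) st'"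
| IfF: "\<not> bval b st \<Longrightarrow> exec c2 st t st' \<Longrightarrow> exec (If b c1 c2) st (t + 1) st'"
| WhileF: "\<not> bval b st \<Longrightarrow> exec (While b c) st 1 st"
| WhileT: "bval b st \<Longrightarrow> exec c st t1 st1 \<Longrightarrow> exec (While b c) st1 t2 st2 \<Longrightarrow>
     exec (While b c) st (t1 + t2 + 1) st2"

text \<open>Input encoding of a Biased Dissolution instance on the complete graph with
  vertex set {0..<n}: register 0 = n, 1 = s, 2 = Delta_s, 3 = r_alpha,
  array 0 holds alpha(0), ..., alpha(n-1) at addresses 0..n-1; everything else 0.
  The answer is read from register 0 (nonzero = yes).\<close>
definition init_state :: "nat \<Rightarrow> nat \<Rightarrow> nat \<Rightarrow> nat \<Rightarrow> (nat \<Rightarrow> nat) \<Rightarrow> state" where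
  "init_state n s \<Delta> r \<alpha> =
     \<lparr> regs = (\<lambda>k. if k = 0 then int n else if k = 1 then int s
                   else if k = 2 then int \<Delta> else if k = 3 then int r else 0),
       arrs = (\<lambda>a i. if a = 0 \<and> 0 \<le> i \<and> i < int n then int (\<alpha> (nat i)) else 0) \<rparr>"

end

theory Submission
  imports Defs
begin

definition prec :: "(nat \<Rightarrow> nat) \<Rightarrow> nat \<Rightarrow> nat \<Rightarrow> bool" where
  "prec \<alpha> j i \<longleftrightarrow> \<alpha> i < \<alpha> j \<or> (\<alpha> j = \<alpha> i \<and> j < i)"

definition rk :: "nat \<Rightarrow> (nat \<Rightarrow> nat) \<Rightarrow> nat \<Rightarrow> nat" where
  "rk n \<alpha> i = card {j. j < n \<and> prec \<alpha> j i}"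

lemma prec_trans: "prec \<alpha> a b \<Longrightarrow> prec \<alpha> b c \<Longrightarrow> prec \<alpha> a c"
  unfolding prec_def by auto

lemma prec_irrefl: "\<not> prec \<alpha> a a" unfolding prec_def by auto

lemma prec_total: "a \<noteq> b \<Longrightarrow> prec \<alpha> a b \<or> prec \<alpha> b a"
  unfolding prec_def by auto

lemma rk_less: assumes "i < n" shows "rk n \<alpha> i < n"
proof -
  have "{j. j < n \<and> prec \<alpha> j i} \<subseteq> {..<n} - {i}" using prec_irrefl by auto
  hence "rk n \<alpha> i \<le> card ({..<n} - {i})" unfolding rk_def by (intro card_mono) auto
  also have "\<dots> = n - 1" using assms by simp
  finally show ?thesis using assms by simp
qed

lemma rk_mono: assumes "prec \<alpha> i j" "i < n" shows "rk n \<alpha> i < rk n \<alpha> j"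
proof -
  have "{l. l < n \<and> prec \<alpha> l i} \<subset> {l. l < n \<and> prec \<alpha> l j}"
    using assms prec_trans prec_irrefl by blast
  thus ?thesis unfolding rk_def by (intro psubset_card_mono) auto
qed

lemma rk_inj: "inj_on (rk n \<alpha>) {..<n}"
proof (rule inj_onI)
  fix a b assume "a \<in> {..<n}" "b \<in> {..<n}" "rk n \<alpha> a = rk n \<alpha> b"
  thus "a = b" using prec_total[of a b \<alpha>] rk_mono[of \<alpha> a b n] rk_mono[of \<alpha> b a n] by fastforce
qed

lemma rk_bij: "bij_betw (rk n \<alpha>) {..<n} {..<n}"
proof -
  have "rk n \<alpha> ` {..<n} \<subseteq> {..<n}" using rk_less by auto
  moreover have "card (rk n \<alpha> ` {..<n}) = card {..<n::nat}" using rk_inj card_image by blast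
  ultimately have "rk n \<alpha> ` {..<n} = {..<n}" by (intro card_subset_eq) auto
  thus ?thesis using rk_inj unfolding bij_betw_def by blast
qed

lemma rk_anti: assumes "rk n \<alpha> i < rk n \<alpha> j" "j < n" shows "\<alpha> j \<le> \<alpha> i"
proof (rule ccontr)
  assume "\<not> ?thesis" hence "prec \<alpha> j i" unfolding prec_def by auto
  thus False using rk_mono[OF _ assms(2)] assms(1) by fastforce
qed

lemma top_sum:
  fixes u :: "nat \<Rightarrow> int"
  assumes mono: "\<And>p p'. p \<le> p' \<Longrightarrow> p' < NN \<Longrightarrow> u p' \<le> u p"
  shows "A \<subseteq> {..<NN} \<Longrightarrow> card A = k \<Longrightarrow> sum u A \<le> sum u {..<k}"
proof (induction k arbitrary: A)
  case 0
  then have "finite A" by (meson finite_lessThan finite_subset)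
  with 0 show ?case by simp
next
  case (Suc k)
  then have fin: "finite A" by (meson finite_lessThan finite_subset)
  with Suc have ne: "A \<noteq> {}" by auto
  define a where "a = Max A"
  have aA: "a \<in> A" using fin ne a_def by simp
  have "A \<subseteq> {..a}" using fin a_def by auto
  hence "card A \<le> Suc a" using card_mono[of "{..a}" A] by simp
  hence ka: "k \<le> a" using Suc by simp
  have aN: "a < NN" using aA Suc by auto
  have c: "card (A - {a}) = k" using Suc aA fin by simp
  have "sum u (A - {a}) \<le> sum u {..<k}" using Suc.IH[OF _ c] Suc.prems by auto
  moreover have "sum u A = u a + sum u (A - {a})" using sum.remove[OF fin aA] .
  moreover have "u a \<le> u k" using mono[OF ka aN] .
  ultimately show ?case by simp
qed

lemma split_sum:
  fixes b :: "'a \<Rightarrow> nat"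
  shows "finite B \<Longrightarrow> k \<le> sum b B \<Longrightarrow> \<exists>b'. (\<forall>y. b' y \<le> b y) \<and> sum b' B = k"
proof (induction B arbitrary: k rule: finite_induct)
  case empty
  then show ?case by (intro exI[of _ "\<lambda>_. 0"]) auto
next
  case (insert x B)
  show ?case
  proof (cases "k \<le> sum b B")
    case True
    then obtain b' where b': "\<forall>y. b' y \<le> b y" "sum b' B = k" using insert by blast
    have "sum (b'(x := 0)) B = sum b' B" using insert(2) by (intro sum.cong) auto
    with b' insert(1,2) show ?thesis by (intro exI[of _ "b'(x := 0)"]) auto
  next
    case False
    have "sum (b(x := k - sum b B)) B = sum b B" using insert(2) by (intro sum.cong) auto
    with False insert show ?thesis by (intro exI[of _ "b(x := k - sum b B)"]) auto
  qed
qed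

lemma transport:
  fixes a :: "'a \<Rightarrow> nat" and b :: "'b \<Rightarrow> nat"
  shows "finite A \<Longrightarrow> finite B \<Longrightarrow> sum a A = sum b B \<Longrightarrow>
    \<exists>M. (\<forall>x\<in>A. (\<Sum>y\<in>B. M (x,y)) = a x) \<and> (\<forall>y\<in>B. (\<Sum>x\<in>A. M (x,y)) = b y)"
proof (induction A arbitrary: b rule: finite_induct)
  case empty
  then show ?case by (intro exI[of _ "\<lambda>_. 0"]) auto
next
  case (insert x A)
  have "a x \<le> sum b B" using insert by simp
  then obtain b' where b': "\<forall>y. b' y \<le> b y" "sum b' B = a x" using split_sum insert(4) by blast
  have "sum (\<lambda>y. b y - b' y) B = sum b B - sum b' B"
    using b'(1) by (simp add: sum_subtractf_nat)
  hence "sum a A = sum (\<lambda>y. b y - b' y) B" using insert b' by simp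
  then obtain M0 where M0: "\<forall>x\<in>A. (\<Sum>y\<in>B. M0 (x,y)) = a x" "\<forall>y\<in>B. (\<Sum>x\<in>A. M0 (x,y)) = b y - b' y"
    using insert by blast
  define M where "M = (\<lambda>(x',y). if x' = x then b' y else M0 (x',y))"
  have r: "\<forall>x'\<in>insert x A. (\<Sum>y\<in>B. M (x',y)) = a x'"
  proof
    fix x' assume x': "x' \<in> insert x A"
    show "(\<Sum>y\<in>B. M (x',y)) = a x'"
    proof (cases "x' = x")
      case True thus ?thesis using b'(2) unfolding M_def by simp
    next
      case False hence "x' \<in> A" using x' by simp
      thus ?thesis using M0(1) False unfolding M_def by simp
    qed
  qed
  have c: "(\<Sum>x'\<in>insert x A. M (x',y)) = b y" if "y \<in> B" for y
  proof -
    have "(\<Sum>x'\<in>insert x A. M (x',y)) = M (x,y) + (\<Sum>x'\<in>A. M (x',y))"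
      using insert(1,2) by simp
    also have "(\<Sum>x'\<in>A. M (x',y)) = (\<Sum>x'\<in>A. M0 (x',y))"
      using insert(2) unfolding M_def by (intro sum.cong) auto
    finally have e: "(\<Sum>x'\<in>insert x A. M (x',y)) = M (x,y) + (\<Sum>x'\<in>A. M0 (x',y))" .
    have "M (x,y) = b' y" unfolding M_def by simp
    with e M0(2) that b'(1) show ?thesis by (metis le_add_diff_inverse)
  qed
  show ?case using r c by blast
qed

lemma Zset_complete:
  assumes "D \<subseteq> {0..<n}"
  shows "Zset D {0..<n} (complete_edges n) = D \<times> ({0..<n} - D)"
  using assms unfolding Zset_def complete_edges_def
  apply auto
  subgoal for a b by (rule exI[of _ a], rule exI[of _ b]) auto
  done

lemma row_sum:
  assumes "x \<in> D"
  shows "sum f {p \<in> D \<times> B. fst p = x} = (\<Sum>y\<in>B. f (x,y))"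
proof -
  have "{p \<in> D \<times> B. fst p = x} = Pair x ` B" using assms by auto
  thus ?thesis by (simp add: sum.reindex inj_on_def)
qed

lemma col_sum:
  assumes "y \<in> B"
  shows "sum f {p \<in> D \<times> B. snd p = y} = (\<Sum>x\<in>D. f (x,y))"
proof -
  have "{p \<in> D \<times> B. snd p = y} = (\<lambda>x. (x,y)) ` D" using assms by auto
  thus ?thesis by (simp add: sum.reindex inj_on_def)
qed

lemma construct:
  fixes n s \<Delta> r T :: nat and \<alpha> :: "nat \<Rightarrow> nat"
  assumes DV: "D \<subseteq> {0..<n}" "D \<noteq> {0..<n}"
    and bal: "card D * s = card ({0..<n} - D) * \<Delta>"
    and als: "\<forall>v\<in>D. \<alpha> v \<le> s"
    and RB: "R \<subseteq> {0..<n} - D" and cR: "card R = r"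
    and RQ: "\<forall>v\<in>R. T \<le> \<alpha> v + \<Delta>"
    and feas: "(\<Sum>v\<in>R. T - \<alpha> v) \<le> (\<Sum>v\<in>D. \<alpha> v)"
    and Tdef: "T = (s+\<Delta>) div 2 + 1"
  shows "\<exists>z z\<alpha>. biased_dissolution {0..<n} (complete_edges n) s \<Delta> r \<alpha> D z z\<alpha> R"
proof -
  define V where "V = {0..<n}"
  define B where "B = V - D"
  have finB: "finite B" and finD: "finite D" using DV unfolding B_def V_def
    by (auto intro: finite_subset)
  have Z: "Zset D V (complete_edges n) = D \<times> B" using Zset_complete[OF DV(1)] unfolding V_def B_def .
  define nd where "nd v = (if v \<in> R then T - \<alpha> v else 0)" for v
  have ndD: "\<forall>v\<in>B. nd v \<le> \<Delta>" using RQ unfolding nd_def by auto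
  have snd: "sum nd B = (\<Sum>v\<in>R. T - \<alpha> v)"
  proof -
    have "sum nd B = sum nd R" using RB finB unfolding nd_def B_def V_def
      by (intro sum.mono_neutral_right) auto
    also have "\<dots> = (\<Sum>v\<in>R. T - \<alpha> v)" unfolding nd_def by simp
    finally show ?thesis .
  qed
  define AD where "AD = (\<Sum>v\<in>D. \<alpha> v)"
  have ADle: "AD \<le> card D * s" unfolding AD_def using als sum_bounded_above[of D \<alpha> s] by simp
  define cap where "cap v = \<Delta> - nd v" for v
  have "sum cap B + sum nd B = sum (\<lambda>_. \<Delta>) B"
    unfolding sum.distrib[symmetric] cap_def using ndD by (intro sum.cong) auto
  hence capsum: "sum cap B + sum nd B = card B * \<Delta>" by simp
  have "AD - sum nd B \<le> sum cap B" using capsum ADle bal unfolding B_def V_def by simp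
  then obtain b' where b': "\<forall>y. b' y \<le> cap y" "sum b' B = AD - sum nd B"
    using split_sum[OF finB] by blast
  define c where "c v = nd v + b' v" for v
  have cD: "\<forall>v\<in>B. c v \<le> \<Delta>" using b'(1) ndD unfolding c_def cap_def
    by (metis le_diff_conv2 add.commute)
  have csum: "sum c B = AD" unfolding c_def sum.distrib using b'(2) snd feas AD_def by simp
  obtain M1 where M1: "\<forall>x\<in>D. (\<Sum>y\<in>B. M1 (x,y)) = \<alpha> x" "\<forall>y\<in>B. (\<Sum>x\<in>D. M1 (x,y)) = c y"
    using transport[OF finD finB, of \<alpha> c] csum unfolding AD_def by metis
  have s1: "(\<Sum>x\<in>D. s - \<alpha> x) + AD = card D * s"
    unfolding AD_def sum.distrib[symmetric] using als by simp
  have s2: "(\<Sum>y\<in>B. \<Delta> - c y) + AD = card B * \<Delta>"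
    unfolding csum[symmetric] sum.distrib[symmetric] using cD by simp
  have "(\<Sum>x\<in>D. s - \<alpha> x) = (\<Sum>y\<in>B. \<Delta> - c y)"
    using s1 s2 bal unfolding B_def V_def by simp
  then obtain M2 where M2: "\<forall>x\<in>D. (\<Sum>y\<in>B. M2 (x,y)) = s - \<alpha> x" "\<forall>y\<in>B. (\<Sum>x\<in>D. M2 (x,y)) = \<Delta> - c y"
    using transport[OF finD finB, of "\<lambda>x. s - \<alpha> x" "\<lambda>y. \<Delta> - c y"] by blast
  define z where "z p = M1 p + M2 p" for p
  have zrow: "(\<Sum>y\<in>B. z (x,y)) = s" if "x \<in> D" for x
    unfolding z_def sum.distrib using M1(1) M2(1) that als by simp
  have zcol: "(\<Sum>x\<in>D. z (x,y)) = \<Delta>" if "y \<in> B" for y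
    unfolding z_def sum.distrib using M1(2) M2(2) that cD by simp
  have zle: "z (x,y) \<le> s" if "x \<in> D" "y \<in> B" for x y
    using member_le_sum[of y B "\<lambda>y. z (x,y)"] finB that zrow by simp
  have M1z: "M1 p \<le> z p" for p unfolding z_def by simp
  have bias: "real (s + \<Delta>) / 2 < real (\<alpha> v + c v)" if "v \<in> R" for v
  proof -
    have "T - \<alpha> v \<le> c v" using that unfolding c_def nd_def by simp
    hence "T \<le> \<alpha> v + c v" by simp
    hence "s + \<Delta> < 2 * (\<alpha> v + c v)" using Tdef by simp
    hence "real (s + \<Delta>) < 2 * real (\<alpha> v + c v)" by linarith
    thus ?thesis by simp
  qed
  have "biased_dissolution V (complete_edges n) s \<Delta> r \<alpha> D z M1 R"
    unfolding biased_dissolution_def dissolution_def Z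
  proof (intro conjI ballI)
    show "D \<subset> V" using DV unfolding V_def by auto
    show "z p \<le> s" if "p \<in> D \<times> B" for p using that zle by auto
    show "(\<Sum>p\<in>{p \<in> D \<times> B. fst p = v'}. z p) = s" if "v' \<in> D" for v'
      using row_sum[OF that, of z B] zrow[OF that] by simp
    show "(\<Sum>p\<in>{p \<in> D \<times> B. snd p = v}. z p) = \<Delta>" if "v \<in> V - D" for v
    proof -
      have "v \<in> B" using that unfolding B_def .
      thus ?thesis using col_sum[of v B z D] zcol by simp
    qed
    show "M1 p \<le> s" if "p \<in> D \<times> B" for p using that zle M1z le_trans by (metis SigmaE)
    show "R \<subseteq> V - D" using RB unfolding V_def .
    show "card R = r" by (rule cR)
    show "M1 p \<le> z p" for p by (rule M1z)
    show "(\<Sum>p\<in>{p \<in> D \<times> B. fst p = v'}. M1 p) = \<alpha> v'" if "v' \<in> D" for v'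
      using row_sum[OF that, of M1 B] M1(1) that by simp
    show "real (s + \<Delta>) / 2 < real (\<alpha> v + (\<Sum>p\<in>{p \<in> D \<times> B. snd p = v}. M1 p))" if "v \<in> R" for v
    proof -
      have "v \<in> B" using that RB unfolding B_def V_def by auto
      thus ?thesis using col_sum[of v B M1 D] M1(2) bias[OF that] by simp
    qed
  qed
  thus ?thesis unfolding V_def by blast
qed

lemma exch:
  fixes b :: "nat \<Rightarrow> nat" and T d r n qc :: nat
  assumes anti: "\<And>p p'. p \<le> p' \<Longrightarrow> p' < n \<Longrightarrow> b p' \<le> b p"
    and DR: "D \<subseteq> {..<n}" "R \<subseteq> {..<n}" "D \<inter> R = {}" "card D = d" "card R = r"
    and RQ: "R \<subseteq> {..<qc}" and qcn: "qc \<le> n"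
    and feas: "(\<Sum>p\<in>R. T - b p) \<le> (\<Sum>p\<in>D. b p)"
  shows "(\<Sum>p\<in>{min (d+r) qc - r ..< min (d+r) qc}. T - b p)
           \<le> (\<Sum>p\<in>{..<d+r} - {min (d+r) qc - r ..< min (d+r) qc}. b p)"
proof -
  have finD: "finite D" and finR: "finite R" using DR by (auto intro: finite_subset)
  have cU: "card (D \<union> R) = d + r" using DR finD finR card_Un_disjoint by metis
  have "d + r \<le> n" using cU DR card_mono[of "{..<n}" "D \<union> R"] by auto
  have rqc: "r \<le> qc" using RQ DR card_mono[of "{..<qc}" R] by auto
  define bb where "bb p = int (b p)" for p
  define nd where "nd p = int (T - b p)" for p
  define g where "g p = - nd p" for p
  define h where "h p = bb p + nd p" for p
  have bbA: "\<And>p p'. p \<le> p' \<Longrightarrow> p' < n \<Longrightarrow> bb p' \<le> bb p" using anti unfolding bb_def by simp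
  have gA: "\<And>p p'. p \<le> p' \<Longrightarrow> p' < n \<Longrightarrow> g p' \<le> g p" using anti unfolding g_def nd_def
    by (simp add: diff_le_mono2)
  have hA: "h p' \<le> h p" if "p \<le> p'" "p' < n" for p p'
  proof -
    have "b p' \<le> b p" using anti that .
    hence "b p' + (T - b p') \<le> b p + (T - b p)" by arith
    thus "h p' \<le> h p" unfolding h_def bb_def nd_def by (metis of_nat_add of_nat_le_iff)
  qed
  have feasI: "sum nd R \<le> sum bb D" using feas unfolding nd_def bb_def
    by (metis of_nat_le_iff of_nat_sum)
  have goal_eq: "((\<Sum>p\<in>I. T - b p) \<le> (\<Sum>p\<in>{..<d+r} - I. b p)) \<longleftrightarrow> sum nd I \<le> sum bb ({..<d+r} - I)" for I
    unfolding nd_def bb_def by (metis of_nat_le_iff of_nat_sum)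
  show ?thesis
  proof (cases "qc \<le> d + r")
    case True
    hence q: "min (d+r) qc = qc" by simp
    define I where "I = {qc - r ..< qc}"
    have A1: "sum bb (D \<union> R) \<le> sum bb {..<d+r}"
      using top_sum[of n bb, OF bbA] DR cU by auto
    have cQR: "card ({..<qc} - R) = qc - r" using RQ DR by (simp add: card_Diff_subset finR)
    have A2: "sum h ({..<qc} - R) \<le> sum h {..<qc - r}"
      using top_sum[of qc h, OF hA] cQR qcn by auto
    have s1: "sum h {..<qc} = sum h ({..<qc} - R) + sum h R"
      using RQ by (metis finite_lessThan sum.subset_diff)
    have "{..<qc} = {..<qc - r} \<union> I" using rqc unfolding I_def by auto
    hence s2: "sum h {..<qc} = sum h {..<qc - r} + sum h I"
      unfolding I_def by (simp add: sum.union_disjoint ivl_disj_int(2))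
    have hI: "sum h I \<le> sum h R" using A2 s1 s2 by linarith
    have sR: "sum h R = sum bb R + sum nd R" unfolding h_def sum.distrib ..
    have sI: "sum h I = sum bb I + sum nd I" unfolding h_def sum.distrib ..
    have sU: "sum bb (D \<union> R) = sum bb D + sum bb R" using DR finD finR sum.union_disjoint by blast
    have Isub: "I \<subseteq> {..<d+r}" using True unfolding I_def by auto
    have sD: "sum bb ({..<d+r} - I) = sum bb {..<d+r} - sum bb I"
      using Isub by (simp add: sum_diff)
    have "sum nd I \<le> sum bb ({..<d+r} - I)"
      using hI sR sI sU sD A1 feasI by linarith
    thus ?thesis unfolding q I_def[symmetric] goal_eq .
  next
    case False
    hence q: "min (d+r) qc = d + r" by simp
    have I: "{d + r - r ..< d + r} = {d ..< d+r}" by simp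
    have A1: "sum g (D \<union> R) \<le> sum g {..<d+r}"
      using top_sum[of n g, OF gA] DR cU by auto
    have A2: "sum h D \<le> sum h {..<d}"
      using top_sum[of n h, OF hA] DR by auto
    have sU: "sum g (D \<union> R) = sum g D + sum g R" using DR finD finR sum.union_disjoint by blast
    have e1: "sum bb D - sum nd R = sum g D + sum g R + sum h D"
      unfolding g_def h_def sum.distrib sum_negf by simp
    have "{..<d+r} = {..<d} \<union> {d..<d+r}" by auto
    hence sg: "sum g {..<d+r} = sum g {..<d} + sum g {d..<d+r}"
      by (simp add: sum.union_disjoint ivl_disj_int(2))
    have e2: "sum g {..<d+r} + sum h {..<d} = sum bb {..<d} - sum nd {d..<d+r}"
      unfolding sg g_def h_def sum.distrib sum_negf by simp
    have "{..<d+r} - {d..<d+r} = {..<d}" by auto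
    moreover have "sum nd {d..<d+r} \<le> sum bb {..<d}"
      using e1 e2 A1 A2 sU feasI by linarith
    ultimately show ?thesis unfolding q I goal_eq by simp
  qed
qed

lemma rk_pos: "p < n \<Longrightarrow> inv_into {..<n} (rk n \<alpha>) p < n \<and> rk n \<alpha> (inv_into {..<n} (rk n \<alpha>) p) = p"
  using rk_bij[of n \<alpha>] by (metis bij_betw_imp_surj_on bij_betw_inv_into_right inv_into_into lessThan_iff)

lemma pos_rk: "i < n \<Longrightarrow> inv_into {..<n} (rk n \<alpha>) (rk n \<alpha> i) = i"
  using rk_inj[of n \<alpha>] by (simp add: inv_into_f_f)

lemma bij_pre: assumes "S \<subseteq> {..<n}" shows "bij_betw (rk n \<alpha>) {i. i < n \<and> rk n \<alpha> i \<in> S} S"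
proof (rule bij_betw_subset[OF rk_bij])
  show "{i. i < n \<and> rk n \<alpha> i \<in> S} \<subseteq> {..<n}" by auto
  show "rk n \<alpha> ` {i. i < n \<and> rk n \<alpha> i \<in> S} = S"
  proof
    show "S \<subseteq> rk n \<alpha> ` {i. i < n \<and> rk n \<alpha> i \<in> S}"
    proof
      fix p assume "p \<in> S" hence "p < n" using assms by auto
      thus "p \<in> rk n \<alpha> ` {i. i < n \<and> rk n \<alpha> i \<in> S}" using rk_pos[OF \<open>p<n\<close>, of \<alpha>] \<open>p \<in> S\<close>
        by (metis (mono_tags, lifting) image_eqI mem_Collect_eq)
    qed
  qed auto
qed

lemma sum_pre: assumes "S \<subseteq> {..<n}"
  shows "(\<Sum>i\<in>{i. i < n \<and> rk n \<alpha> i \<in> S}. f i) = (\<Sum>p\<in>S. f (inv_into {..<n} (rk n \<alpha>) p))"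
proof -
  have "(\<Sum>i\<in>{i. i < n \<and> rk n \<alpha> i \<in> S}. f i) = (\<Sum>i\<in>{i. i < n \<and> rk n \<alpha> i \<in> S}. f (inv_into {..<n} (rk n \<alpha>) (rk n \<alpha> i)))"
    by (intro sum.cong) (auto simp: pos_rk)
  also have "\<dots> = (\<Sum>p\<in>S. f (inv_into {..<n} (rk n \<alpha>) p))"
    using sum.reindex_bij_betw[OF bij_pre[OF assms]] .
  finally show ?thesis .
qed

lemma card_pre: "S \<subseteq> {..<n} \<Longrightarrow> card {i. i < n \<and> rk n \<alpha> i \<in> S} = card S"
  using bij_pre bij_betw_same_card by blast

lemma sum_img: assumes "D \<subseteq> {..<n}"
  shows "(\<Sum>i\<in>D. f i) = (\<Sum>p\<in>rk n \<alpha> ` D. f (inv_into {..<n} (rk n \<alpha>) p))"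
proof -
  have inj: "inj_on (rk n \<alpha>) D" using rk_inj assms inj_on_subset by blast
  have "(\<Sum>p\<in>rk n \<alpha> ` D. f (inv_into {..<n} (rk n \<alpha>) p)) = (\<Sum>i\<in>D. f (inv_into {..<n} (rk n \<alpha>) (rk n \<alpha> i)))"
    using sum.reindex[OF inj] by simp
  also have "\<dots> = (\<Sum>i\<in>D. f i)" using assms by (intro sum.cong) (auto simp: pos_rk)
  finally show ?thesis by simp
qed

lemma Q_rank:
  assumes "i < n" "T \<le> \<alpha> i + \<Delta>"
  shows "rk n \<alpha> i < card {j. j < n \<and> T \<le> \<alpha> j + \<Delta>}"
proof -
  have ri: "rk n \<alpha> i < n" using rk_less assms by blast
  have sub: "{j. j < n \<and> rk n \<alpha> j \<in> {..rk n \<alpha> i}} \<subseteq> {j. j < n \<and> T \<le> \<alpha> j + \<Delta>}"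
  proof
    fix j assume j: "j \<in> {j. j < n \<and> rk n \<alpha> j \<in> {..rk n \<alpha> i}}"
    show "j \<in> {j. j < n \<and> T \<le> \<alpha> j + \<Delta>}"
    proof (cases "rk n \<alpha> j = rk n \<alpha> i")
      case True thus ?thesis using j assms rk_inj[of n \<alpha>] by (auto dest: inj_onD)
    next
      case False hence "rk n \<alpha> j < rk n \<alpha> i" using j by auto
      hence "\<alpha> i \<le> \<alpha> j" using rk_anti assms(1) by blast
      thus ?thesis using j assms by auto
    qed
  qed
  have "card {j. j < n \<and> rk n \<alpha> j \<in> {..rk n \<alpha> i}} = Suc (rk n \<alpha> i)"
  proof -
    have "{..rk n \<alpha> i} \<subseteq> {..<n}" using ri by auto
    from card_pre[OF this, of \<alpha>] show ?thesis by simp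
  qed
  moreover have "card {j. j < n \<and> rk n \<alpha> j \<in> {..rk n \<alpha> i}} \<le> card {j. j < n \<and> T \<le> \<alpha> j + \<Delta>}"
    using sub by (intro card_mono) auto
  ultimately show ?thesis by simp
qed

lemma rank_Q:
  assumes "i < n" "rk n \<alpha> i < card {j. j < n \<and> T \<le> \<alpha> j + \<Delta>}"
  shows "T \<le> \<alpha> i + \<Delta>"
proof (rule ccontr)
  assume ni: "\<not> ?thesis"
  have ri: "rk n \<alpha> i < n" using rk_less assms by blast
  have sub: "{j. j < n \<and> T \<le> \<alpha> j + \<Delta>} \<subseteq> {j. j < n \<and> rk n \<alpha> j \<in> {..<rk n \<alpha> i}}"
  proof
    fix j assume j: "j \<in> {j. j < n \<and> T \<le> \<alpha> j + \<Delta>}"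
    have "rk n \<alpha> j < rk n \<alpha> i"
    proof (rule ccontr)
      assume "\<not> ?thesis"
      hence "rk n \<alpha> i = rk n \<alpha> j \<or> rk n \<alpha> i < rk n \<alpha> j" by auto
      thus False
      proof
        assume "rk n \<alpha> i = rk n \<alpha> j"
        hence "i = j" using j assms rk_inj[of n \<alpha>] by (auto dest: inj_onD)
        thus False using j ni by auto
      next
        assume "rk n \<alpha> i < rk n \<alpha> j"
        hence "\<alpha> j \<le> \<alpha> i" using rk_anti j by blast
        thus False using j ni by auto
      qed
    qed
    thus "j \<in> {j. j < n \<and> rk n \<alpha> j \<in> {..<rk n \<alpha> i}}" using j by auto
  qed
  have "card {j. j < n \<and> T \<le> \<alpha> j + \<Delta>} \<le> card {j. j < n \<and> rk n \<alpha> j \<in> {..<rk n \<alpha> i}}"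
    using sub by (intro card_mono) auto
  also have "\<dots> = rk n \<alpha> i" using card_pre[of "{..<rk n \<alpha> i}" n \<alpha>] ri by auto
  finally show False using assms by simp
qed

lemma char:
  fixes n s \<Delta> r d T qc q :: nat and \<alpha> :: "nat \<Rightarrow> nat" and I :: "nat set"
  assumes sp: "s > 0" and Dp: "\<Delta> > 0" and rp: "r > 0" and al: "\<forall>v<n. \<alpha> v \<le> s"
  and d_def: "d = n * \<Delta> div (s + \<Delta>)" and T_def: "T = (s + \<Delta>) div 2 + 1"
    and qc_def: "qc = card {i. i < n \<and> T \<le> \<alpha> i + \<Delta>}"
    and q_def: "q = min (d + r) qc"
    and I_def: "I = {q - r ..< q}"
  shows "Biased_Dissolution {0..<n} (complete_edges n) s \<Delta> r \<alpha> \<longleftrightarrow>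
    (n * \<Delta> mod (s + \<Delta>) = 0 \<and> 0 < d \<and> d + r \<le> n \<and> r \<le> q \<and>
     (\<Sum>i\<in>{i. i < n \<and> rk n \<alpha> i \<in> I}. T - \<alpha> i) \<le> (\<Sum>i\<in>{i. i < n \<and> rk n \<alpha> i \<in> {..<d+r} - I}. \<alpha> i))"
proof
  assume "Biased_Dissolution {0..<n} (complete_edges n) s \<Delta> r \<alpha>"
  then obtain D z z\<alpha> R where bd: "biased_dissolution {0..<n} (complete_edges n) s \<Delta> r \<alpha> D z z\<alpha> R"
    unfolding Biased_Dissolution_def by blast
  define V where "V = {0..<n::nat}"
  define B where "B = V - D"
  have DV: "D \<subset> V" using bd unfolding biased_dissolution_def dissolution_def V_def by blast
  have finD: "finite D" and finB: "finite B" using DV unfolding B_def V_def by (auto intro: finite_subset)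
  have Z: "Zset D V (complete_edges n) = D \<times> B" using Zset_complete[of D n] DV unfolding V_def B_def by auto
  have rows: "\<forall>x\<in>D. (\<Sum>y\<in>B. z (x,y)) = s"
    using bd row_sum[of _ D z B] unfolding biased_dissolution_def dissolution_def Z V_def[symmetric] by auto
  have cols: "\<forall>y\<in>B. (\<Sum>x\<in>D. z (x,y)) = \<Delta>"
    using bd col_sum[of _ B z D] unfolding biased_dissolution_def dissolution_def Z V_def[symmetric] B_def by auto
  have rowsa: "\<forall>x\<in>D. (\<Sum>y\<in>B. z\<alpha> (x,y)) = \<alpha> x"
    using bd row_sum[of _ D z\<alpha> B] unfolding biased_dissolution_def Z V_def[symmetric] by auto
  have zale: "\<forall>x\<in>D. \<forall>y\<in>B. z\<alpha> (x,y) \<le> z (x,y)"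
    using bd unfolding biased_dissolution_def Z V_def[symmetric] by auto
  have RB: "R \<subseteq> B" and cR: "card R = r"
    using bd unfolding biased_dissolution_def V_def[symmetric] B_def by auto
  have biasR: "\<forall>v\<in>R. real (s + \<Delta>) / 2 < real (\<alpha> v + (\<Sum>x\<in>D. z\<alpha> (x,v)))"
  proof
    fix v assume v: "v \<in> R"
    hence vB: "v \<in> B" using RB by auto
    have "real (s+\<Delta>)/2 < real (\<alpha> v + sum z\<alpha> {p \<in> D \<times> B. snd p = v})"
      using bd v unfolding biased_dissolution_def Z V_def[symmetric] by blast
    thus "real (s + \<Delta>) / 2 < real (\<alpha> v + (\<Sum>x\<in>D. z\<alpha> (x,v)))" using col_sum[OF vB, of z\<alpha> D] by simp
  qed
  have "card D * s = (\<Sum>x\<in>D. \<Sum>y\<in>B. z (x,y))" using rows by simp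
  also have "\<dots> = (\<Sum>y\<in>B. \<Sum>x\<in>D. z (x,y))" by (rule sum.swap)
  also have "\<dots> = card B * \<Delta>" using cols by simp
  finally have bal: "card D * s = card B * \<Delta>" .
  have cB: "card B = n - card D" and cDn: "card D \<le> n" using DV unfolding B_def V_def
    by (auto simp: card_Diff_subset finD intro: card_mono[of "{0..<n}", simplified])
  have eq: "card D * (s + \<Delta>) = n * \<Delta>" using bal cB cDn
    by (simp add: algebra_simps diff_mult_distrib)
  have mod0: "n * \<Delta> mod (s + \<Delta>) = 0" using eq by (metis mod_mult_self1_is_0 mod_mult_self2_is_0 mult.commute)
  have dD: "d = card D" unfolding d_def using eq sp by (metis nonzero_mult_div_cancel_right add_gr_0 not_gr0)
  have dpos: "0 < d"
  proof (rule ccontr)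
    assume "\<not> 0 < d" hence "D = {}" using dD finD by auto
    hence "n = 0" using eq Dp by simp
    thus False using DV unfolding V_def by auto
  qed
  have DRd: "D \<inter> R = {}" using RB unfolding B_def by auto
  have "card (D \<union> R) = d + r" using DRd finD finB RB dD cR by (metis card_Un_disjoint finite_subset)
  moreover have "card (D \<union> R) \<le> n" using DV RB unfolding B_def V_def
    by (intro card_mono[of "{0..<n}", simplified]) auto
  ultimately have drn: "d + r \<le> n" by simp
  define c where "c v = (\<Sum>x\<in>D. z\<alpha> (x,v))" for v
  have cle: "c v \<le> \<Delta>" if "v \<in> B" for v
  proof -
    have "c v \<le> (\<Sum>x\<in>D. z (x,v))" unfolding c_def using zale that by (intro sum_mono) auto
    thus ?thesis using cols that by simp
  qed
  have need: "T \<le> \<alpha> v + c v" if "v \<in> R" for v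
  proof -
    have "real (s + \<Delta>) < 2 * real (\<alpha> v + c v)" using biasR that unfolding c_def by auto
    hence "s + \<Delta> < 2 * (\<alpha> v + c v)" by linarith
    thus ?thesis unfolding T_def by simp
  qed
  have RQ: "T \<le> \<alpha> v + \<Delta>" if "v \<in> R" for v using need[OF that] cle[of v] that RB by fastforce
  have "(\<Sum>v\<in>R. T - \<alpha> v) \<le> (\<Sum>v\<in>R. c v)" using need by (intro sum_mono) (simp add: le_diff_conv add.commute)
  also have "\<dots> \<le> (\<Sum>v\<in>B. c v)" using RB finB by (intro sum_mono2) auto
  also have "\<dots> = (\<Sum>x\<in>D. \<Sum>y\<in>B. z\<alpha> (x,y))" unfolding c_def by (rule sum.swap)
  also have "\<dots> = (\<Sum>x\<in>D. \<alpha> x)" using rowsa by simp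
  finally have feas: "(\<Sum>v\<in>R. T - \<alpha> v) \<le> (\<Sum>v\<in>D. \<alpha> v)" .
  define pos where "pos = inv_into {..<n} (rk n \<alpha>)"
  define b where "b p = \<alpha> (pos p)" for p
  have DVn: "D \<subseteq> {..<n}" and RVn: "R \<subseteq> {..<n}" using DV RB unfolding B_def V_def by auto
  have anti: "b p' \<le> b p" if "p \<le> p'" "p' < n" for p p'
  proof (cases "p = p'")
    case False
    hence "p < p'" using that by simp
    moreover have "pos p' < n" "rk n \<alpha> (pos p') = p'" "rk n \<alpha> (pos p) = p"
      using rk_pos[of p' n \<alpha>] rk_pos[of p n \<alpha>] that unfolding pos_def by auto
    ultimately show ?thesis unfolding b_def using rk_anti by metis
  qed simp
  have "D \<union> R \<subseteq> {..<n}" using DVn RVn by auto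
  hence inj: "inj_on (rk n \<alpha>) (D \<union> R)" by (rule inj_on_subset[OF rk_inj])
  have qcn: "qc \<le> n" unfolding qc_def by (rule order_trans[OF card_mono[of "{..<n}"]]) auto
  have RQ': "rk n \<alpha> ` R \<subseteq> {..<qc}"
  proof
    fix p assume "p \<in> rk n \<alpha> ` R"
    then obtain v where v: "v \<in> R" "p = rk n \<alpha> v" by blast
    have "v < n" using v RVn by auto
    from Q_rank[of v n T \<alpha> \<Delta>, OF this RQ[OF v(1)]] show "p \<in> {..<qc}" using v unfolding qc_def by simp
  qed
  have injD: "inj_on (rk n \<alpha>) D" by (rule inj_on_subset[OF inj]) auto
  have injR: "inj_on (rk n \<alpha>) R" by (rule inj_on_subset[OF inj]) auto
  have cD': "card (rk n \<alpha> ` D) = d" using dD card_image[OF injD] by simp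
  have cR': "card (rk n \<alpha> ` R) = r" using cR card_image[OF injR] by simp
  have disj': "rk n \<alpha> ` D \<inter> rk n \<alpha> ` R = {}" using inj DRd by (auto dest: inj_onD)
  have sub': "rk n \<alpha> ` D \<subseteq> {..<n}" "rk n \<alpha> ` R \<subseteq> {..<n}" using DVn RVn rk_less by auto
  have feas': "(\<Sum>p\<in>rk n \<alpha> ` R. T - b p) \<le> (\<Sum>p\<in>rk n \<alpha> ` D. b p)"
    using feas sum_img[OF DVn, of \<alpha> \<alpha>] sum_img[OF RVn, of "\<lambda>i. T - \<alpha> i" \<alpha>] unfolding b_def pos_def by simp
  have ex: "(\<Sum>p\<in>I. T - b p) \<le> (\<Sum>p\<in>{..<d+r} - I. b p)"
    using exch[of n b "rk n \<alpha> ` D" "rk n \<alpha> ` R" d r qc T, OF anti sub' disj' cD' cR' RQ' qcn feas']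
    unfolding I_def q_def by blast
  have rq: "r \<le> q" using RQ' cR' card_mono[of "{..<qc}" "rk n \<alpha> ` R"] unfolding q_def by auto
  have Isub: "I \<subseteq> {..<n}" using drn unfolding I_def q_def by auto
  have Isub2: "{..<d+r} - I \<subseteq> {..<n}" using drn by auto
  have "(\<Sum>i\<in>{i. i < n \<and> rk n \<alpha> i \<in> I}. T - \<alpha> i) \<le> (\<Sum>i\<in>{i. i < n \<and> rk n \<alpha> i \<in> {..<d+r} - I}. \<alpha> i)"
    using ex sum_pre[OF Isub, of "\<lambda>i. T - \<alpha> i" \<alpha>] sum_pre[OF Isub2, of \<alpha> \<alpha>]
    unfolding b_def pos_def by simp
  thus "n * \<Delta> mod (s + \<Delta>) = 0 \<and> 0 < d \<and> d + r \<le> n \<and> r \<le> q \<and>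
     (\<Sum>i\<in>{i. i < n \<and> rk n \<alpha> i \<in> I}. T - \<alpha> i) \<le> (\<Sum>i\<in>{i. i < n \<and> rk n \<alpha> i \<in> {..<d+r} - I}. \<alpha> i)"
    using mod0 dpos drn rq by blast
next
  assume H: "n * \<Delta> mod (s + \<Delta>) = 0 \<and> 0 < d \<and> d + r \<le> n \<and> r \<le> q \<and>
     (\<Sum>i\<in>{i. i < n \<and> rk n \<alpha> i \<in> I}. T - \<alpha> i) \<le> (\<Sum>i\<in>{i. i < n \<and> rk n \<alpha> i \<in> {..<d+r} - I}. \<alpha> i)"
  define D where "D = {i. i < n \<and> rk n \<alpha> i \<in> {..<d+r} - I}"
  define R where "R = {i. i < n \<and> rk n \<alpha> i \<in> I}"
  have eq: "d * (s + \<Delta>) = n * \<Delta>" using H unfolding d_def by (metis mult.commute mult_div_mod_eq add_0_right)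
  have qdr: "q \<le> d + r" unfolding q_def by simp
  have Isub: "I \<subseteq> {..<d+r}" using qdr unfolding I_def by auto
  have cI: "card I = r" using H unfolding I_def by simp
  have Isubn: "I \<subseteq> {..<n}" "{..<d+r} - I \<subseteq> {..<n}" using Isub H by auto
  have cD: "card D = d" unfolding D_def using card_pre[OF Isubn(2), of \<alpha>] Isub cI
    by (simp add: card_Diff_subset finite_subset)
  have cR: "card R = r" unfolding R_def using card_pre[OF Isubn(1), of \<alpha>] cI by simp
  have DV: "D \<subseteq> {0..<n}" unfolding D_def by auto
  have dn: "d < n"
  proof -
    have n0: "0 < n"
    proof (rule ccontr)
      assume "\<not> 0 < n" hence "d * (s + \<Delta>) = 0" using eq by simp
      thus False using H sp by simp
    qed
    have "n * \<Delta> < n * (s + \<Delta>)" using n0 sp by simp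
    hence "d * (s + \<Delta>) < n * (s + \<Delta>)" using eq by simp
    thus ?thesis by simp
  qed
  have DnV: "D \<noteq> {0..<n}" using cD dn by auto
  have RB: "R \<subseteq> {0..<n} - D" unfolding R_def D_def by auto
  have cB: "card ({0..<n} - D) = n - d" using DV cD by (simp add: card_Diff_subset finite_subset)
  have bal: "card D * s = card ({0..<n} - D) * \<Delta>" unfolding cB cD using eq dn
    by (simp add: diff_mult_distrib algebra_simps)
  have als: "\<forall>v\<in>D. \<alpha> v \<le> s" using al unfolding D_def by auto
  have RQ: "\<forall>v\<in>R. T \<le> \<alpha> v + \<Delta>"
  proof
    fix v assume "v \<in> R"
    hence "v < n" "rk n \<alpha> v < qc" unfolding R_def I_def q_def by auto
    thus "T \<le> \<alpha> v + \<Delta>" using rank_Q unfolding qc_def by blast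
  qed
  have feas: "(\<Sum>v\<in>R. T - \<alpha> v) \<le> (\<Sum>v\<in>D. \<alpha> v)" using H unfolding R_def D_def by blast
  obtain z z\<alpha> where "biased_dissolution {0..<n} (complete_edges n) s \<Delta> r \<alpha> D z z\<alpha> R"
    using construct[OF DV DnV bal als RB cR RQ feas T_def] by blast
  thus "Biased_Dissolution {0..<n} (complete_edges n) s \<Delta> r \<alpha>" unfolding Biased_Dissolution_def by blast
qed

fun loopfree :: "com \<Rightarrow> bool" where
  "loopfree (Seq c1 c2) = (loopfree c1 \<and> loopfree c2)"
| "loopfree (If b c1 c2) = (loopfree c1 \<and> loopfree c2)"
| "loopfree (While b c) = False"
| "loopfree _ = True"

fun run :: "com \<Rightarrow> state \<Rightarrow> state" where
  "run SKIP st = st"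
| "run (Assign k e) st = st\<lparr>regs := (regs st)(k := aval e st)\<rparr>"
| "run (ArrAssign a i e) st = st\<lparr>arrs := (arrs st)(a := (arrs st a)(aval i st := aval e st))\<rparr>"
| "run (Seq c1 c2) st = run c2 (run c1 st)"
| "run (If b c1 c2) st = (if bval b st then run c1 st else run c2 st)"
| "run (While b c) st = st"

fun wcet :: "com \<Rightarrow> nat" where
  "wcet (Seq c1 c2) = wcet c1 + wcet c2"
| "wcet (If b c1 c2) = max (wcet c1) (wcet c2) + 1"
| "wcet _ = 1"

lemma lf_exec: "loopfree c \<Longrightarrow> \<exists>t. exec c st t (run c st) \<and> t \<le> wcet c"
proof (induction c arbitrary: st)
  case SKIP then show ?case using exec.Skip by fastforce
next
  case (Assign k e) then show ?case using exec.Assign by fastforce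
next
  case (ArrAssign a i e) then show ?case using exec.ArrAssign by fastforce
next
  case (Seq c1 c2)
  then obtain t1 where t1: "exec c1 st t1 (run c1 st)" "t1 \<le> wcet c1" by auto
  from Seq obtain t2 where t2: "exec c2 (run c1 st) t2 (run c2 (run c1 st))" "t2 \<le> wcet c2" by fastforce
  show ?case using exec.Seq[OF t1(1) t2(1)] t1(2) t2(2) by (intro exI[of _ "t1+t2"]) auto
next
  case (If b c1 c2)
  show ?case
  proof (cases "bval b st")
    case True
    from If obtain t where "exec c1 st t (run c1 st)" "t \<le> wcet c1" by auto
    thus ?thesis using exec.IfT[OF True] True by (intro exI[of _ "t+1"]) auto
  next
    case False
    from If obtain t where "exec c2 st t (run c2 st)" "t \<le> wcet c2" by auto
    thus ?thesis using exec.IfF[OF False] False by (intro exI[of _ "t+1"]) auto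
  qed
next
  case (While b c) then show ?case by simp
qed

definition runs :: "com \<Rightarrow> state \<Rightarrow> nat \<Rightarrow> (state \<Rightarrow> bool) \<Rightarrow> bool" where
  "runs c st K P \<longleftrightarrow> (\<exists>t st'. exec c st t st' \<and> t \<le> K \<and> P st')"

lemma runs_lf: "loopfree c \<Longrightarrow> P (run c st) \<Longrightarrow> wcet c \<le> K \<Longrightarrow> runs c st K P"
  unfolding runs_def using lf_exec by (meson le_trans)

lemma runs_seq: "runs c1 st K1 Q \<Longrightarrow> (\<And>st'. Q st' \<Longrightarrow> runs c2 st' K2 P) \<Longrightarrow> runs (Seq c1 c2) st (K1 + K2) P"
  unfolding runs_def by (meson add_mono exec.Seq)

lemma runs_mono: "runs c st K P \<Longrightarrow> K \<le> K' \<Longrightarrow> (\<And>x. P x \<Longrightarrow> P' x) \<Longrightarrow> runs c st K' P'"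
  unfolding runs_def by (meson le_trans)

lemma runs_while:
  assumes step: "\<And>k st. I k st \<Longrightarrow> k < NN \<Longrightarrow> bval b st \<and> runs c st C (I (Suc k))"
    and stop: "\<And>st. I NN st \<Longrightarrow> \<not> bval b st"
  shows "I k st \<Longrightarrow> k \<le> NN \<Longrightarrow> runs (While b c) st ((NN - k) * (C + 1) + 1) (I NN)"
proof (induction "NN - k" arbitrary: k st)
  case 0
  hence "k = NN" by simp
  with 0 show ?case unfolding runs_def using exec.WhileF[OF stop] by fastforce
next
  case (Suc x)
  hence kN: "k < NN" by simp
  from step[OF Suc.prems(1) kN] obtain t1 st1 where s1: "bval b st" "exec c st t1 st1" "t1 \<le> C" "I (Suc k) st1"
    unfolding runs_def by blast
  have "runs (While b c) st1 ((NN - Suc k) * (C + 1) + 1) (I NN)"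
    using Suc.hyps(1)[of "Suc k" st1] Suc.hyps(2) s1(4) kN by simp
  then obtain t2 st2 where s2: "exec (While b c) st1 t2 st2" "t2 \<le> (NN - Suc k) * (C + 1) + 1" "I NN st2"
    unfolding runs_def by blast
  have "t1 + t2 + 1 \<le> (NN - k) * (C + 1) + 1"
  proof -
    have "NN - k = Suc (NN - Suc k)" using kN by simp
    thus ?thesis using s1(3) s2(2) by simp
  qed
  thus ?case unfolding runs_def using exec.WhileT[OF s1(1) s1(2) s2(1)] s2(3) by blast
qed

definition inner :: com where
  "inner = Seq (If (Less (Arr 0 (Reg 8)) (Arr 0 (Reg 9))) (Assign 10 (Plus (Reg 10) (N 1)))
                 (If (And (Eq (Arr 0 (Reg 9)) (Arr 0 (Reg 8))) (Less (Reg 9) (Reg 8)))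
                     (Assign 10 (Plus (Reg 10) (N 1))) SKIP))
               (Assign 9 (Plus (Reg 9) (N 1)))"

definition rbody :: com where
  "rbody = Seq (Seq (Assign 9 (N 0)) (Assign 10 (N 0)))
              (Seq (While (Less (Reg 9) (Reg 0)) inner)
                   (Seq (ArrAssign 1 (Reg 8) (Reg 10)) (Assign 8 (Plus (Reg 8) (N 1)))))"

definition initc :: com where
  "initc = Seq (Assign 4 (Plus (Reg 1) (Reg 2))) (Seq (Assign 5 (Div (Times (Reg 0) (Reg 2)) (Reg 4)))
     (Seq (Assign 6 (Plus (Reg 5) (Reg 3))) (Seq (Assign 7 (Plus (Div (Reg 4) (N 2)) (N 1))) (Assign 8 (N 0)))))"

definition base :: "nat \<Rightarrow> nat \<Rightarrow> nat \<Rightarrow> nat \<Rightarrow> (nat \<Rightarrow> nat) \<Rightarrow> state \<Rightarrow> bool" where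
  "base n s \<Delta> r \<alpha> st \<longleftrightarrow> regs st 0 = int n \<and> regs st 1 = int s \<and> regs st 2 = int \<Delta> \<and> regs st 3 = int r \<and>
     regs st 4 = int (s + \<Delta>) \<and> regs st 5 = int (n * \<Delta> div (s + \<Delta>)) \<and>
     regs st 6 = int (n * \<Delta> div (s + \<Delta>) + r) \<and> regs st 7 = int ((s + \<Delta>) div 2 + 1) \<and>
     (\<forall>i<n. arrs st 0 (int i) = int (\<alpha> i))"

definition ranks_upto :: "nat \<Rightarrow> (nat \<Rightarrow> nat) \<Rightarrow> nat \<Rightarrow> state \<Rightarrow> bool" where
  "ranks_upto n \<alpha> k st \<longleftrightarrow> (\<forall>i<k. arrs st 1 (int i) = int (rk n \<alpha> i))"

definition Jinv :: "nat \<Rightarrow> nat \<Rightarrow> nat \<Rightarrow> nat \<Rightarrow> (nat \<Rightarrow> nat) \<Rightarrow> nat \<Rightarrow> nat \<Rightarrow> state \<Rightarrow> bool" where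
  "Jinv n s \<Delta> r \<alpha> i j st \<longleftrightarrow> base n s \<Delta> r \<alpha> st \<and> regs st 8 = int i \<and> regs st 9 = int j \<and>
     regs st 10 = int (card {l. l < j \<and> prec \<alpha> l i}) \<and> ranks_upto n \<alpha> i st"

definition Rinv :: "nat \<Rightarrow> nat \<Rightarrow> nat \<Rightarrow> nat \<Rightarrow> (nat \<Rightarrow> nat) \<Rightarrow> nat \<Rightarrow> state \<Rightarrow> bool" where
  "Rinv n s \<Delta> r \<alpha> k st \<longleftrightarrow> base n s \<Delta> r \<alpha> st \<and> regs st 8 = int k \<and> ranks_upto n \<alpha> k st"

lemma card_prec_Suc:
  "card {l. l < Suc j \<and> prec \<alpha> l i} = card {l. l < j \<and> prec \<alpha> l i} + (if prec \<alpha> j i then 1 else 0)"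
proof -
  have "{l. l < Suc j \<and> prec \<alpha> l i} = {l. l < j \<and> prec \<alpha> l i} \<union> (if prec \<alpha> j i then {j} else {})"
    by (auto simp: less_Suc_eq)
  thus ?thesis by (auto simp: card_insert_if)
qed

lemma init_ok: "runs initc (init_state n s \<Delta> r \<alpha>) 5 (Rinv n s \<Delta> r \<alpha> 0)"
  by (rule runs_lf) (auto simp: initc_def init_state_def Rinv_def base_def ranks_upto_def zdiv_int)

lemma inner_step:
  assumes "i < n" "Jinv n s \<Delta> r \<alpha> i j st" "j < n"
  shows "bval (Less (Reg 9) (Reg 0)) st \<and> runs inner st 4 (Jinv n s \<Delta> r \<alpha> i (Suc j))"
proof
  have b: "base n s \<Delta> r \<alpha> st" and r8: "regs st 8 = int i" and r9: "regs st 9 = int j"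
    and r10: "regs st 10 = int (card {l. l < j \<and> prec \<alpha> l i})" and rk: "ranks_upto n \<alpha> i st"
    using assms(2) unfolding Jinv_def by auto
  have a0: "\<forall>i<n. arrs st 0 (int i) = int (\<alpha> i)" and r0: "regs st 0 = int n" using b unfolding base_def by auto
  show "bval (Less (Reg 9) (Reg 0)) st" using r9 r0 assms by simp
  have ai: "arrs st 0 (int i) = int (\<alpha> i)" and aj: "arrs st 0 (int j) = int (\<alpha> j)" using a0 assms by auto
  show "runs inner st 4 (Jinv n s \<Delta> r \<alpha> i (Suc j))"
  proof (rule runs_lf)
    show "loopfree inner" by (simp add: inner_def)
    show "wcet inner \<le> 4" by (simp add: inner_def)
    show "Jinv n s \<Delta> r \<alpha> i (Suc j) (run inner st)"
      using b r8 r9 r10 rk ai aj unfolding Jinv_def inner_def card_prec_Suc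
      by (auto simp: base_def ranks_upto_def prec_def)
  qed
qed

lemma inner_loop:
  assumes "i < n" "Jinv n s \<Delta> r \<alpha> i 0 st"
  shows "runs (While (Less (Reg 9) (Reg 0)) inner) st (n * 5 + 1) (Jinv n s \<Delta> r \<alpha> i n)"
proof -
  have "runs (While (Less (Reg 9) (Reg 0)) inner) st ((n - 0) * (4 + 1) + 1) (Jinv n s \<Delta> r \<alpha> i n)"
  proof (rule runs_while[where I = "Jinv n s \<Delta> r \<alpha> i"])
    show "bval (Less (Reg 9) (Reg 0)) st' \<and> runs inner st' 4 (Jinv n s \<Delta> r \<alpha> i (Suc k))"
      if "Jinv n s \<Delta> r \<alpha> i k st'" "k < n" for k st' using inner_step[OF assms(1) that(1) that(2)] .
    show "\<not> bval (Less (Reg 9) (Reg 0)) st'" if "Jinv n s \<Delta> r \<alpha> i n st'" for st'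
      using that unfolding Jinv_def base_def by simp
  qed (use assms in auto)
  thus ?thesis by simp
qed

lemma rbody_step:
  assumes "k < n" "Rinv n s \<Delta> r \<alpha> k st"
  shows "bval (Less (Reg 8) (Reg 0)) st \<and> runs rbody st (n * 5 + 5) (Rinv n s \<Delta> r \<alpha> (Suc k))"
proof
  show "bval (Less (Reg 8) (Reg 0)) st" using assms unfolding Rinv_def base_def by simp
  have A: "runs (Seq (Assign 9 (N 0)) (Assign 10 (N 0))) st 2 (Jinv n s \<Delta> r \<alpha> k 0)"
    by (rule runs_lf) (use assms in \<open>auto simp: Jinv_def Rinv_def base_def ranks_upto_def\<close>)
  have C: "runs (Seq (ArrAssign 1 (Reg 8) (Reg 10)) (Assign 8 (Plus (Reg 8) (N 1)))) st'' 2 (Rinv n s \<Delta> r \<alpha> (Suc k))"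
    if "Jinv n s \<Delta> r \<alpha> k n st''" for st''
  proof (rule runs_lf)
    show "Rinv n s \<Delta> r \<alpha> (Suc k) (run (Seq (ArrAssign 1 (Reg 8) (Reg 10)) (Assign 8 (Plus (Reg 8) (N 1)))) st'')"
      using that unfolding Jinv_def Rinv_def
      by (auto simp: base_def ranks_upto_def rk_def less_Suc_eq)
  qed auto
  have B: "runs (Seq (While (Less (Reg 9) (Reg 0)) inner) (Seq (ArrAssign 1 (Reg 8) (Reg 10)) (Assign 8 (Plus (Reg 8) (N 1))))) st' ((n * 5 + 1) + 2) (Rinv n s \<Delta> r \<alpha> (Suc k))"
    if "Jinv n s \<Delta> r \<alpha> k 0 st'" for st'
    by (rule runs_seq[OF inner_loop[OF assms(1) that] C])
  have "runs rbody st (2 + ((n * 5 + 1) + 2)) (Rinv n s \<Delta> r \<alpha> (Suc k))"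
    unfolding rbody_def by (rule runs_seq[OF A B])
  thus "runs rbody st (n * 5 + 5) (Rinv n s \<Delta> r \<alpha> (Suc k))" by (rule runs_mono) auto
qed

lemma rank_loop:
  assumes "Rinv n s \<Delta> r \<alpha> 0 st"
  shows "runs (While (Less (Reg 8) (Reg 0)) rbody) st (n * (n * 5 + 6) + 1) (Rinv n s \<Delta> r \<alpha> n)"
proof -
  have "runs (While (Less (Reg 8) (Reg 0)) rbody) st ((n - 0) * ((n * 5 + 5) + 1) + 1) (Rinv n s \<Delta> r \<alpha> n)"
  proof (rule runs_while[where I = "Rinv n s \<Delta> r \<alpha>"])
    show "bval (Less (Reg 8) (Reg 0)) st' \<and> runs rbody st' (n * 5 + 5) (Rinv n s \<Delta> r \<alpha> (Suc k))"
      if "Rinv n s \<Delta> r \<alpha> k st'" "k < n" for k st' using rbody_step[OF that(2) that(1)] .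
    show "\<not> bval (Less (Reg 8) (Reg 0)) st'" if "Rinv n s \<Delta> r \<alpha> n st'" for st'
      using that unfolding Rinv_def base_def by simp
  qed (use assms in auto)
  thus ?thesis by (rule runs_mono) (auto simp: algebra_simps)
qed

definition qbody :: com where
  "qbody = Seq (If (Less (Plus (Arr 0 (Reg 8)) (Reg 2)) (Reg 7)) SKIP (Assign 11 (Plus (Reg 11) (N 1))))
               (Assign 8 (Plus (Reg 8) (N 1)))"

definition mid0 :: com where "mid0 = Seq (Assign 8 (N 0)) (Assign 11 (N 0))"

definition midc :: com where
  "midc = Seq (If (Less (Reg 6) (Reg 11)) (Assign 12 (Reg 6)) (Assign 12 (Reg 11))) (Seq (Assign 8 (N 0)) (Assign 13 (N 0)))"

definition fbody :: com where
  "fbody = Seq (If (Less (Arr 1 (Reg 8)) (Reg 6))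
                  (If (And (Not (Less (Arr 1 (Reg 8)) (Minus (Reg 12) (Reg 3)))) (Less (Arr 1 (Reg 8)) (Reg 12)))
                      (If (Less (Arr 0 (Reg 8)) (Reg 7)) (Assign 13 (Minus (Reg 13) (Minus (Reg 7) (Arr 0 (Reg 8))))) SKIP)
                      (Assign 13 (Plus (Reg 13) (Arr 0 (Reg 8)))))
                  SKIP)
               (Assign 8 (Plus (Reg 8) (N 1)))"

definition finalc :: com where
  "finalc = If (And (Eq (Mod (Times (Reg 0) (Reg 2)) (Reg 4)) (N 0)) (And (Less (N 0) (Reg 5))
              (And (Not (Less (Reg 0) (Reg 6))) (And (Not (Less (Reg 12) (Reg 3))) (Not (Less (Reg 13) (N 0)))))))
            (Assign 0 (N 1)) (Assign 0 (N 0))"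

definition qcnt :: "nat \<Rightarrow> nat \<Rightarrow> nat \<Rightarrow> (nat \<Rightarrow> nat) \<Rightarrow> nat \<Rightarrow> nat" where
  "qcnt n s \<Delta> \<alpha> k = card {i. i < k \<and> (s + \<Delta>) div 2 + 1 \<le> \<alpha> i + \<Delta>}"

definition Qinv :: "nat \<Rightarrow> nat \<Rightarrow> nat \<Rightarrow> nat \<Rightarrow> (nat \<Rightarrow> nat) \<Rightarrow> nat \<Rightarrow> state \<Rightarrow> bool" where
  "Qinv n s \<Delta> r \<alpha> k st \<longleftrightarrow> base n s \<Delta> r \<alpha> st \<and> regs st 8 = int k \<and>
     regs st 11 = int (qcnt n s \<Delta> \<alpha> k) \<and> ranks_upto n \<alpha> n st"

definition qv :: "nat \<Rightarrow> nat \<Rightarrow> nat \<Rightarrow> nat \<Rightarrow> (nat \<Rightarrow> nat) \<Rightarrow> nat" where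
  "qv n s \<Delta> r \<alpha> = min (n * \<Delta> div (s + \<Delta>) + r) (qcnt n s \<Delta> \<alpha> n)"

definition contrib :: "nat \<Rightarrow> nat \<Rightarrow> nat \<Rightarrow> nat \<Rightarrow> (nat \<Rightarrow> nat) \<Rightarrow> nat \<Rightarrow> int" where
  "contrib n s \<Delta> r \<alpha> i =
     (if int (rk n \<alpha> i) < int (n * \<Delta> div (s + \<Delta>) + r) then
        (if \<not> (int (rk n \<alpha> i) < int (qv n s \<Delta> r \<alpha>) - int r) \<and> int (rk n \<alpha> i) < int (qv n s \<Delta> r \<alpha>) then
           (if int (\<alpha> i) < int ((s + \<Delta>) div 2 + 1) then - (int ((s + \<Delta>) div 2 + 1) - int (\<alpha> i)) else 0)
         else int (\<alpha> i))
      else 0)"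

definition Finv :: "nat \<Rightarrow> nat \<Rightarrow> nat \<Rightarrow> nat \<Rightarrow> (nat \<Rightarrow> nat) \<Rightarrow> nat \<Rightarrow> state \<Rightarrow> bool" where
  "Finv n s \<Delta> r \<alpha> k st \<longleftrightarrow> base n s \<Delta> r \<alpha> st \<and> regs st 8 = int k \<and>
     regs st 12 = int (qv n s \<Delta> r \<alpha>) \<and> ranks_upto n \<alpha> n st \<and> regs st 13 = (\<Sum>i<k. contrib n s \<Delta> r \<alpha> i)"

lemma card_Suc_P: "card {i. i < Suc k \<and> P i} = card {i. i < k \<and> P i} + (if P k then 1 else 0)"
proof -
  have "{i. i < Suc k \<and> P i} = {i. i < k \<and> P i} \<union> (if P k then {k} else {})"
    by (auto simp: less_Suc_eq)
  thus ?thesis by (auto simp: card_insert_if)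
qed

lemma mid0_ok: "Rinv n s \<Delta> r \<alpha> n st \<Longrightarrow> runs mid0 st 2 (Qinv n s \<Delta> r \<alpha> 0)"
  by (rule runs_lf) (auto simp: mid0_def Rinv_def Qinv_def base_def ranks_upto_def qcnt_def)

lemma qbody_step:
  assumes "k < n" "Qinv n s \<Delta> r \<alpha> k st"
  shows "bval (Less (Reg 8) (Reg 0)) st \<and> runs qbody st 3 (Qinv n s \<Delta> r \<alpha> (Suc k))"
proof
  show "bval (Less (Reg 8) (Reg 0)) st" using assms unfolding Qinv_def base_def by simp
  have ak: "arrs st 0 (int k) = int (\<alpha> k)" using assms unfolding Qinv_def base_def by auto
  show "runs qbody st 3 (Qinv n s \<Delta> r \<alpha> (Suc k))"
  proof (rule runs_lf)
    show "Qinv n s \<Delta> r \<alpha> (Suc k) (run qbody st)"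
      using assms ak unfolding Qinv_def qbody_def qcnt_def card_Suc_P
      by (auto simp: base_def ranks_upto_def)
  qed (auto simp: qbody_def)
qed

lemma q_loop:
  assumes "Qinv n s \<Delta> r \<alpha> 0 st"
  shows "runs (While (Less (Reg 8) (Reg 0)) qbody) st (n * 4 + 1) (Qinv n s \<Delta> r \<alpha> n)"
proof -
  have "runs (While (Less (Reg 8) (Reg 0)) qbody) st ((n - 0) * (3 + 1) + 1) (Qinv n s \<Delta> r \<alpha> n)"
  proof (rule runs_while[where I = "Qinv n s \<Delta> r \<alpha>"])
    show "bval (Less (Reg 8) (Reg 0)) st' \<and> runs qbody st' 3 (Qinv n s \<Delta> r \<alpha> (Suc k))"
      if "Qinv n s \<Delta> r \<alpha> k st'" "k < n" for k st' using qbody_step[OF that(2) that(1)] .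
    show "\<not> bval (Less (Reg 8) (Reg 0)) st'" if "Qinv n s \<Delta> r \<alpha> n st'" for st'
      using that unfolding Qinv_def base_def by simp
  qed (use assms in auto)
  thus ?thesis by (rule runs_mono) (auto simp: algebra_simps)
qed

lemma midc_ok: "Qinv n s \<Delta> r \<alpha> n st \<Longrightarrow> runs midc st 4 (Finv n s \<Delta> r \<alpha> 0)"
  by (rule runs_lf) (auto simp: midc_def Qinv_def Finv_def base_def ranks_upto_def qv_def)

lemma fbody_step:
  assumes "k < n" "Finv n s \<Delta> r \<alpha> k st"
  shows "bval (Less (Reg 8) (Reg 0)) st \<and> runs fbody st 5 (Finv n s \<Delta> r \<alpha> (Suc k))"
proof
  show "bval (Less (Reg 8) (Reg 0)) st" using assms unfolding Finv_def base_def by simp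
  have ak: "arrs st 0 (int k) = int (\<alpha> k)" and rk: "arrs st 1 (int k) = int (rk n \<alpha> k)"
    using assms unfolding Finv_def base_def ranks_upto_def by auto
  have r13: "regs (run fbody st) 13 = regs st 13 + contrib n s \<Delta> r \<alpha> k"
    using assms ak rk unfolding Finv_def fbody_def contrib_def base_def by auto
  show "runs fbody st 5 (Finv n s \<Delta> r \<alpha> (Suc k))"
  proof (rule runs_lf)
    show "Finv n s \<Delta> r \<alpha> (Suc k) (run fbody st)"
      using assms r13 unfolding Finv_def
      by (auto simp: fbody_def base_def ranks_upto_def)
  qed (auto simp: fbody_def)
qed

lemma f_loop:
  assumes "Finv n s \<Delta> r \<alpha> 0 st"
  shows "runs (While (Less (Reg 8) (Reg 0)) fbody) st (n * 6 + 1) (Finv n s \<Delta> r \<alpha> n)"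
proof -
  have "runs (While (Less (Reg 8) (Reg 0)) fbody) st ((n - 0) * (5 + 1) + 1) (Finv n s \<Delta> r \<alpha> n)"
  proof (rule runs_while[where I = "Finv n s \<Delta> r \<alpha>"])
    show "bval (Less (Reg 8) (Reg 0)) st' \<and> runs fbody st' 5 (Finv n s \<Delta> r \<alpha> (Suc k))"
      if "Finv n s \<Delta> r \<alpha> k st'" "k < n" for k st' using fbody_step[OF that(2) that(1)] .
    show "\<not> bval (Less (Reg 8) (Reg 0)) st'" if "Finv n s \<Delta> r \<alpha> n st'" for st'
      using that unfolding Finv_def base_def by simp
  qed (use assms in auto)
  thus ?thesis by (rule runs_mono) (auto simp: algebra_simps)
qed

lemma mod_int_eq: "(int n * int \<Delta> mod int (s + \<Delta>) = 0) \<longleftrightarrow> n * \<Delta> mod (s + \<Delta>) = 0"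
proof -
  have "int n * int \<Delta> mod int (s + \<Delta>) = int (n * \<Delta> mod (s + \<Delta>))" by (simp add: zmod_int)
  thus ?thesis by simp
qed

lemma final_ok:
  assumes "Finv n s \<Delta> r \<alpha> n st"
  shows "runs finalc st 2 (\<lambda>st'. regs st' 0 \<noteq> 0 \<longleftrightarrow>
     (n * \<Delta> mod (s + \<Delta>) = 0 \<and> 0 < n * \<Delta> div (s + \<Delta>) \<and> n * \<Delta> div (s + \<Delta>) + r \<le> n \<and>
      r \<le> qv n s \<Delta> r \<alpha> \<and> 0 \<le> (\<Sum>i<n. contrib n s \<Delta> r \<alpha> i)))"
proof (rule runs_lf)
  have b: "regs st 0 = int n" "regs st 2 = int \<Delta>" "regs st 4 = int (s + \<Delta>)" "regs st 3 = int r"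
    "regs st 5 = int (n * \<Delta> div (s + \<Delta>))" "regs st 6 = int (n * \<Delta> div (s + \<Delta>) + r)"
    "regs st 12 = int (qv n s \<Delta> r \<alpha>)" "regs st 13 = (\<Sum>i<n. contrib n s \<Delta> r \<alpha> i)"
    using assms unfolding Finv_def base_def by auto
  note m = mod_int_eq[of n \<Delta> s]
  show "regs (run finalc st) 0 \<noteq> 0 \<longleftrightarrow>
     (n * \<Delta> mod (s + \<Delta>) = 0 \<and> 0 < n * \<Delta> div (s + \<Delta>) \<and> n * \<Delta> div (s + \<Delta>) + r \<le> n \<and>
      r \<le> qv n s \<Delta> r \<alpha> \<and> 0 \<le> (\<Sum>i<n. contrib n s \<Delta> r \<alpha> i))"
    unfolding finalc_def using b m by (simp del: of_nat_add add: not_less)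
qed (auto simp: finalc_def)

definition prog :: com where
  "prog = Seq initc (Seq (While (Less (Reg 8) (Reg 0)) rbody) (Seq mid0 (Seq (While (Less (Reg 8) (Reg 0)) qbody)
            (Seq midc (Seq (While (Less (Reg 8) (Reg 0)) fbody) finalc)))))"

lemma contrib_sum:
  assumes rq: "r \<le> qv n s \<Delta> r \<alpha>"
  defines "q \<equiv> qv n s \<Delta> r \<alpha>"
  shows "(0 \<le> (\<Sum>i<n. contrib n s \<Delta> r \<alpha> i)) \<longleftrightarrow>
    (\<Sum>i\<in>{i. i < n \<and> rk n \<alpha> i \<in> {q - r..<q}}. (s + \<Delta>) div 2 + 1 - \<alpha> i)
      \<le> (\<Sum>i\<in>{i. i < n \<and> rk n \<alpha> i \<in> {..<n * \<Delta> div (s + \<Delta>) + r} - {q - r..<q}}. \<alpha> i)"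
proof -
  define T where "T = (s + \<Delta>) div 2 + 1"
  define m where "m = n * \<Delta> div (s + \<Delta>) + r"
  define R0 where "R0 = {i. i < n \<and> rk n \<alpha> i \<in> {q - r..<q}}"
  define D0 where "D0 = {i. i < n \<and> rk n \<alpha> i \<in> {..<m} - {q - r..<q}}"
  have qm: "q \<le> m" unfolding q_def m_def qv_def by simp
  have qr: "int q - int r = int (q - r)" using rq unfolding q_def by simp
  have pt: "contrib n s \<Delta> r \<alpha> i = (if i \<in> D0 then int (\<alpha> i) else 0) - (if i \<in> R0 then int (T - \<alpha> i) else 0)"
    if "i < n" for i
  proof -
    have iD: "(i \<in> D0) = (rk n \<alpha> i < m \<and> \<not> (q - r \<le> rk n \<alpha> i \<and> rk n \<alpha> i < q))"
      using that unfolding D0_def by auto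
    have iR: "(i \<in> R0) = (q - r \<le> rk n \<alpha> i \<and> rk n \<alpha> i < q)"
      using that unfolding R0_def by auto
    have c1: "(int (rk n \<alpha> i) < int m) = (rk n \<alpha> i < m)" by (rule of_nat_less_iff)
    have c2: "(int (rk n \<alpha> i) < int q - int r) = (rk n \<alpha> i < q - r)" unfolding qr by (rule of_nat_less_iff)
    have c3: "(int (rk n \<alpha> i) < int q) = (rk n \<alpha> i < q)" by (rule of_nat_less_iff)
    have c4: "(int (\<alpha> i) < int T) = (\<alpha> i < T)" by (rule of_nat_less_iff)
    show ?thesis unfolding contrib_def q_def[symmetric] T_def[symmetric] m_def[symmetric] c1 c2 c3 c4 iD iR
      using qm by (auto simp: of_nat_diff)
  qed
  have "(\<Sum>i<n. contrib n s \<Delta> r \<alpha> i) = (\<Sum>i<n. (if i \<in> D0 then int (\<alpha> i) else 0)) - (\<Sum>i<n. (if i \<in> R0 then int (T - \<alpha> i) else 0))"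
    unfolding sum_subtractf[symmetric] by (intro sum.cong) (auto simp: pt)
  also have "(\<Sum>i<n. (if i \<in> D0 then int (\<alpha> i) else 0)) = (\<Sum>i\<in>D0. int (\<alpha> i))"
  proof -
    have "{..<n} \<inter> D0 = D0" unfolding D0_def by auto
    thus ?thesis using sum.inter_restrict[of "{..<n}" "\<lambda>i. int (\<alpha> i)" D0] by simp
  qed
  also have "(\<Sum>i<n. (if i \<in> R0 then int (T - \<alpha> i) else 0)) = (\<Sum>i\<in>R0. int (T - \<alpha> i))"
  proof -
    have "{..<n} \<inter> R0 = R0" unfolding R0_def by auto
    thus ?thesis using sum.inter_restrict[of "{..<n}" "\<lambda>i. int (T - \<alpha> i)" R0] by simp
  qed
  finally have e: "(\<Sum>i<n. contrib n s \<Delta> r \<alpha> i) = int (\<Sum>i\<in>D0. \<alpha> i) - int (\<Sum>i\<in>R0. T - \<alpha> i)" by simp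
  show ?thesis unfolding e R0_def[symmetric] T_def[symmetric] m_def[symmetric] D0_def[symmetric] by (simp del: of_nat_sum)
qed

lemma time_bound: fixes n :: nat shows "5 + ((n * (n * 5 + 6) + 1) + (2 + ((n * 4 + 1) + (4 + ((n * 6 + 1) + 2))))) \<le> 40 * (n ^ 2 + 1)"
proof -
  have "n \<le> n * n + 1" by (cases n) auto
  thus ?thesis by (simp add: power2_eq_square algebra_simps)
qed

theorem theorem5:
  shows "\<exists>(P :: com) (c :: nat). \<forall>n s \<Delta> r (\<alpha> :: nat \<Rightarrow> nat).
     s > 0 \<longrightarrow> \<Delta> > 0 \<longrightarrow> r > 0 \<longrightarrow> (\<forall>v < n. \<alpha> v \<le> s) \<longrightarrow>
     (\<exists>t st'. exec P (init_state n s \<Delta> r \<alpha>) t st' \<and> t \<le> c * (n ^ 2 + 1) \<and>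
        (regs st' 0 \<noteq> 0 \<longleftrightarrow> Biased_Dissolution {0..<n} (complete_edges n) s \<Delta> r \<alpha>))"
proof (rule exI[of _ prog], rule exI[of _ "40::nat"], intro allI impI)
  fix n s \<Delta> r :: nat and \<alpha> :: "nat \<Rightarrow> nat"
  assume sp: "s > 0" and Dp: "\<Delta> > 0" and rp: "r > 0" and al: "\<forall>v < n. \<alpha> v \<le> s"
  define Cond where "Cond = (n * \<Delta> mod (s + \<Delta>) = 0 \<and> 0 < n * \<Delta> div (s + \<Delta>) \<and> n * \<Delta> div (s + \<Delta>) + r \<le> n \<and>
      r \<le> qv n s \<Delta> r \<alpha> \<and> 0 \<le> (\<Sum>i<n. contrib n s \<Delta> r \<alpha> i))"
  have R: "runs prog (init_state n s \<Delta> r \<alpha>)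
      (5 + ((n * (n * 5 + 6) + 1) + (2 + ((n * 4 + 1) + (4 + ((n * 6 + 1) + 2))))))
      (\<lambda>st'. regs st' 0 \<noteq> 0 \<longleftrightarrow> Cond)"
    unfolding prog_def Cond_def
    apply (rule runs_seq[OF init_ok])
    apply (rule runs_seq[OF rank_loop], assumption)
    apply (rule runs_seq[OF mid0_ok], assumption)
    apply (rule runs_seq[OF q_loop], assumption)
    apply (rule runs_seq[OF midc_ok], assumption)
    apply (rule runs_seq[OF f_loop], assumption)
    apply (erule final_ok)
    done
  have ch: "Biased_Dissolution {0..<n} (complete_edges n) s \<Delta> r \<alpha> \<longleftrightarrow> Cond"
  proof -
    note C = char[OF sp Dp rp al refl refl refl refl refl]
    have qv: "qv n s \<Delta> r \<alpha> = min (n * \<Delta> div (s + \<Delta>) + r) (card {i. i < n \<and> (s + \<Delta>) div 2 + 1 \<le> \<alpha> i + \<Delta>})"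
      unfolding qv_def qcnt_def ..
    show ?thesis
    proof (cases "r \<le> qv n s \<Delta> r \<alpha>")
      case True
      show ?thesis unfolding C Cond_def qv[symmetric] by (simp only: contrib_sum[OF True])
    next
      case False thus ?thesis unfolding C Cond_def qv[symmetric] by simp
    qed
  qed
  have R2: "runs prog (init_state n s \<Delta> r \<alpha>) (40 * (n ^ 2 + 1))
      (\<lambda>st'. regs st' 0 \<noteq> 0 \<longleftrightarrow> Biased_Dissolution {0..<n} (complete_edges n) s \<Delta> r \<alpha>)"
    by (rule runs_mono[OF R time_bound]) (simp add: ch)
  then show "\<exists>t st'. exec prog (init_state n s \<Delta> r \<alpha>) t st' \<and> t \<le> 40 * (n ^ 2 + 1) \<and>
        (regs st' 0 \<noteq> 0 \<longleftrightarrow> Biased_Dissolution {0..<n} (complete_edges n) s \<Delta> r \<alpha>)"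
    unfolding runs_def by blast
qed

end
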